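(* Let $\Sigma$ be an alphabet, let $\tau \in \mathcal{T}(\Sigma)$, let $t, t' \in \mathcal{T}(\Sigma)$, and let $a_1 \neq a_2$ be two letters of $\Sigma$. If $\sigma_{a_i}^{\tau}(t) = \sigma_{a_i}^{\tau}(t')$ for $i = 1, 2$, then $t = t'$.
   Context: Let $\Sigma$ be an alphabet not containing $0,1$. A binary tree over $\Sigma$ is a finite set $t \subseteq \{0,1\}^*\Sigma$ such that for any $ua, vb \in t$ with $ua \neq vb$, $u$ is not a prefix of $v$ and $v$ is not a prefix of $u$; $\mathcal{T}(\Sigma)$ is the set of such trees, $\mathbf 0=\emptyset$, and each letter $a$ is identified with the tree $\{a\}$. The operation is $t\star t' = 0.t\cup 1.t'$. Every map $h\colon\Sigma\to\mathcal{T}(\Sigma)$ extends uniquely to an endomorphism of $\langle\mathcal{T}(\Sigma),\star\rangle$ (a map $h$ with $h(t\star t')=h(t)\star h(t')$; it satisfies $h(\mathbf 0)=\mathbf 0$). For $a\in\Sigma$ and $\tau\in\mathcal{T}(\Sigma)$, the grafting $\sigma_a^{\tau}$ is the endomorphism with $\sigma_a^\tau(a)=\tau$ and $\sigma_a^\tau(b)=b$ for $b\in\Sigma$, $b\neq a$. *)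

theory Defs
  imports "HOL-Library.Sublist"
begin

text \<open>Words of {0,1}^* Sigma are represented as pairs (u, a) with u a bool list
  (False = 0, True = 1) and a a letter of the alphabet, i.e. an element of type 'a.\<close>

type_synonym 'a bword = "bool list \<times> 'a"

definition is_btree :: "'a bword set \<Rightarrow> bool" where
  "is_btree t \<longleftrightarrow> finite t \<and>
     (\<forall>u a v b. (u, a) \<in> t \<longrightarrow> (v, b) \<in> t \<longrightarrow> (u, a) \<noteq> (v, b) \<longrightarrow>
        \<not> prefix u v \<and> \<not> prefix v u)"

definition btrees :: "'a bword set set" where
  "btrees = {t. is_btree t}"

definition letter :: "'a \<Rightarrow> 'a bword set" where
  "letter a = {([], a)}"

definition bstar :: "'a bword set \<Rightarrow> 'a bword set \<Rightarrow> 'a bword set" where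
  "bstar t t' = {(False # u, a) | u a. (u, a) \<in> t} \<union> {(True # u, a) | u a. (u, a) \<in> t'}"

text \<open>The unique endomorphism extending h : Sigma -> T(Sigma): every leaf a at
  address u is replaced by the tree h a grafted at u.\<close>
definition extend :: "('a \<Rightarrow> 'a bword set) \<Rightarrow> 'a bword set \<Rightarrow> 'a bword set" where
  "extend h t = {(u @ v, b) | u a v b. (u, a) \<in> t \<and> (v, b) \<in> h a}"

definition graft :: "'a \<Rightarrow> 'a bword set \<Rightarrow> 'a bword set \<Rightarrow> 'a bword set" where
  "graft a \<tau> = extend (\<lambda>b. if b = a then \<tau> else letter b)"

lemma extend_letter: "extend h (letter a) = h a"
  by (auto simp: extend_def letter_def)

lemma extend_empty: "extend h {} = {}"
  by (simp add: extend_def)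

end

theory Submission
  imports Defs
begin

lemma graft_mem:
  "(p, c) \<in> graft a \<tau> t \<longleftrightarrow> ((p, c) \<in> t \<and> c \<noteq> a) \<or> (\<exists>u v. p = u @ v \<and> (u, a) \<in> t \<and> (v, c) \<in> \<tau>)"
  by (auto simp: graft_def extend_def letter_def split: if_splits)

lemma bt_eq:
  assumes "is_btree t" "(u, a) \<in> t" "(v, b) \<in> t" "prefix u v"
  shows "u = v \<and> a = b"
proof (rule ccontr)
  assume "\<not> (u = v \<and> a = b)"
  hence ne: "(u, a) \<noteq> (v, b)" by simp
  have "\<forall>u a v b. (u, a) \<in> t \<longrightarrow> (v, b) \<in> t \<longrightarrow> (u, a) \<noteq> (v, b) \<longrightarrow>
        \<not> prefix u v \<and> \<not> prefix v u" using assms(1) by (simp add: is_btree_def)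
  from this[rule_format, OF assms(2) assms(3) ne] assms(4) show False by simp
qed

lemma key:
  assumes tau: "is_btree \<tau>" and ht: "is_btree t" and ht': "is_btree t'"
    and ne: "a1 \<noteq> a2"
    and e1: "graft a1 \<tau> t = graft a1 \<tau> t'"
    and e2: "graft a2 \<tau> t = graft a2 \<tau> t'"
    and m: "(u, b) \<in> t" and nb: "b \<noteq> a1"
  shows "(u, b) \<in> t'"
proof (rule ccontr)
  assume nm: "(u, b) \<notin> t'"
  have "(u, b) \<in> graft a1 \<tau> t" using m nb by (simp add: graft_mem)
  hence "(u, b) \<in> graft a1 \<tau> t'" using e1 by simp
  then obtain u' v where u: "u = u' @ v" and ua: "(u', a1) \<in> t'" and vb: "(v, b) \<in> \<tau>"
    using nm by (auto simp: graft_mem)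
  have "(u', a1) \<in> graft a2 \<tau> t'" using ua ne by (simp add: graft_mem)
  hence "(u', a1) \<in> graft a2 \<tau> t" using e2 by simp
  then consider "(u', a1) \<in> t" | w x where "u' = w @ x" "(w, a2) \<in> t" "(x, a1) \<in> \<tau>"
    by (auto simp: graft_mem)
  then show False
  proof cases
    case 1
    then show False using bt_eq[OF ht 1 m] u nb by simp
  next
    case (2 w x)
    have "w = u \<and> a2 = b" using bt_eq[OF ht 2(2) m] u 2(1) by simp
    with u 2(1) have "x = []" "v = []" by auto
    with 2(3) vb bt_eq[OF tau, of "[]" a1 "[]" b] \<open>w = u \<and> a2 = b\<close> ne show False by simp
  qed
qed

theorem mainTheorem2:
  fixes \<tau> t t' :: "'a bword set" and a1 a2 :: 'a
  assumes "\<tau> \<in> btrees" and "t \<in> btrees" and "t' \<in> btrees"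
    and "a1 \<noteq> a2"
    and "graft a1 \<tau> t = graft a1 \<tau> t'"
    and "graft a2 \<tau> t = graft a2 \<tau> t'"
  shows "t = t'"
proof -
  have b: "is_btree \<tau>" "is_btree t" "is_btree t'" using assms(1-3) by (auto simp: btrees_def)
  have n2: "a2 \<noteq> a1" using assms(4) by (rule not_sym)
  have A: "(u, c) \<in> t'" if "(u, c) \<in> t" for u c
  proof (cases "c = a1")
    case True
    hence "c \<noteq> a2" using assms(4) by blast
    then show ?thesis by (rule key[OF b n2 assms(6) assms(5) that])
  next
    case False
    then show ?thesis by (rule key[OF b assms(4) assms(5) assms(6) that])
  qed
  have B: "(u, c) \<in> t" if "(u, c) \<in> t'" for u c
  proof (cases "c = a1")
    case True
    hence "c \<noteq> a2" using assms(4) by blast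
    then show ?thesis by (rule key[OF b(1,3,2) n2 assms(6)[symmetric] assms(5)[symmetric] that])
  next
    case False
    then show ?thesis by (rule key[OF b(1,3,2) assms(4) assms(5)[symmetric] assms(6)[symmetric] that])
  qed
  show ?thesis
  proof (rule set_eqI)
    fix x
    show "x \<in> t \<longleftrightarrow> x \<in> t'"
    proof (cases x)
      case (Pair u c)
      show ?thesis unfolding Pair using A[of u c] B[of u c] by (rule iffI)
    qed
  qed
qed

end
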